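(* Let $(\underline x(t),I(t),\underline y(t),J(t),N(t))$ be the coupled process below started from $(\underline x_0,I_0,\underline y_0,J_0,n+m)$ with $I_0=\{1,\dots,n\}$, $J_0=\{1,\dots,n+m\}$. Then for every $t\ge0$, $$\sum_{x=0}^{\varepsilon^{-1}}|\xi_{\underline x(t),I(t)}(x)-\xi_{\underline y(t),J(t)}(x)|\le|D_{\ne}(t)|+m,$$ where $D_{\ne}(t)=\{i\in I(t):x_i(t)\ne y_i(t)\}$.
   Context: Fix $j>0$, $\varepsilon>0$ with $\varepsilon^{-1}\in\mathbb N$, $\Lambda_\varepsilon=\{0,\dots,\varepsilon^{-1}\}$, integers $n>0$, $m\ge0$. A labeled configuration is $(\underline x,I)$ with $I\subset\mathbb N$ finite, $x_i\in\Lambda_\varepsilon$; $\xi_{\underline x,I}(x)=\sum_{i\in I}\mathbf 1_{x_i=x}$. State space $S$: all $(\underline x,I,\underline y,J,N)$ with $I\subset J$, $|J\setminus I|\le m$, $N=\max J$. $I_==\{i\in I:x_i=y_i\}$. Jumps: (1) for each $i\in I\setminus I_=$ and sign $\pm$, at rate $1/2$, $x_i\to x_i\pm1$ (suppressed if outside $\Lambda_\varepsilon$); for each $i\in J\setminus I_=$ and sign, at rate $1/2$, $y_i\to y_i\pm1$ (suppressed if outside); (2) for each $i\in I_=$ and sign, at rate $1/2$, $x_i,y_i$ both move to $x_i\pm1$ (suppressed if outside); (3) at rate $\varepsilon j$: $N\to N+1$, label $N+1$ added to $I$ and $J$ with $x_{N+1}=y_{N+1}=0$; (4) at rate $\varepsilon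 j$: let $i$ be the largest label at the rightmost occupied site of $\underline x$ and $k$ the largest label at the rightmost occupied site of $\underline y$; remove $i$ from $\underline x,I$ and $k$ from $\underline y,J$; if $k\in I$ and $i\ne k$ then: if $x_k\le y_i$ relabel the $\underline y$-particle $i$ as $k$; otherwise relabel the $\underline x$-particle $k$ as $i$; $N$ unchanged. *)

theory Defs
  imports Complex_Main
begin

(* A state (x, I, y, J, N): positions x, y : label => site (only values on I resp. J matter),
   finite label sets I \<subseteq> J, and the counter N. Sites are integers in {0..M}, M = 1/eps. *)
type_synonym cstate = "(nat \<Rightarrow> int) \<times> nat set \<times> (nat \<Rightarrow> int) \<times> nat set \<times> nat"

definition occ :: "(nat \<Rightarrow> int) \<Rightarrow> nat set \<Rightarrow> int \<Rightarrow> nat" where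
  "occ x I p = card {i \<in> I. x i = p}"

definition top_label :: "(nat \<Rightarrow> int) \<Rightarrow> nat set \<Rightarrow> nat" where
  "top_label x I = Max {l \<in> I. x l = Max (x ` I)}"

definition exit_state :: "cstate \<Rightarrow> cstate" where
  "exit_state s = (case s of (x, I, y, J, N) \<Rightarrow>
     if I = {} then (if J = {} then s else (x, I, y, J - {top_label y J}, N))
     else (let i = top_label x I; k = top_label y J in
       if k \<in> I \<and> i \<noteq> k then
         (if x k \<le> y i then (x, I - {i}, y(k := y i), J - {i}, N)
          else (x(i := x k), I - {k}, y, J - {k}, N))
       else (x, I - {i}, y, J - {k}, N)))"

(* Possible jumps (transitions with positive rate) of the coupled process on Lambda = {0..M}.
   Suppressed jumps (leaving Lambda) are simply not transitions. *)
inductive cstep :: "nat \<Rightarrow> cstate \<Rightarrow> cstate \<Rightarrow> bool" for M :: nat where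
  move_x: "\<lbrakk> i \<in> I; x i \<noteq> y i; d \<in> {1, -1}; 0 \<le> x i + d; x i + d \<le> int M \<rbrakk>
      \<Longrightarrow> cstep M (x, I, y, J, N) (x(i := x i + d), I, y, J, N)"
| move_y: "\<lbrakk> i \<in> J; i \<notin> I \<or> x i \<noteq> y i; d \<in> {1, -1}; 0 \<le> y i + d; y i + d \<le> int M \<rbrakk>
      \<Longrightarrow> cstep M (x, I, y, J, N) (x, I, y(i := y i + d), J, N)"
| move_both: "\<lbrakk> i \<in> I; x i = y i; d \<in> {1, -1}; 0 \<le> x i + d; x i + d \<le> int M \<rbrakk>
      \<Longrightarrow> cstep M (x, I, y, J, N) (x(i := x i + d), I, y(i := x i + d), J, N)"
| arrive: "cstep M (x, I, y, J, N)
      (x(Suc N := 0), insert (Suc N) I, y(Suc N := 0), insert (Suc N) J, Suc N)"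
| leave: "cstep M s (exit_state s)"

end

theory Submission
  imports Defs
begin

definition cinv :: "nat \<Rightarrow> cstate \<Rightarrow> bool" where
  "cinv m s = (case s of (x, I, y, J, N) \<Rightarrow> finite J \<and> I \<subseteq> J \<and> J \<subseteq> {..N} \<and>
      card {i \<in> I. x i \<noteq> y i} + card (J - I) \<le> m)"

lemma top_label_props:
  assumes "finite I" "I \<noteq> {}"
  shows "top_label x I \<in> I" "\<And>l. l \<in> I \<Longrightarrow> x l \<le> x (top_label x I)"
proof -
  have mx: "Max (x ` I) \<in> x ` I" using assms by simp
  then have ne: "{l \<in> I. x l = Max (x ` I)} \<noteq> {}" by auto
  have fin: "finite {l \<in> I. x l = Max (x ` I)}" using assms by simp
  have "top_label x I \<in> {l \<in> I. x l = Max (x ` I)}"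
    unfolding top_label_def using Max_in[OF fin ne] .
  then show "top_label x I \<in> I" by simp
  fix l assume "l \<in> I"
  then have "x l \<le> Max (x ` I)" using assms by simp
  also have "\<dots> = x (top_label x I)"
    using \<open>top_label x I \<in> {l \<in> I. x l = Max (x ` I)}\<close> by simp
  finally show "x l \<le> x (top_label x I)" .
qed

lemma card_le_plus1: "finite A \<Longrightarrow> i \<in> A \<Longrightarrow> B \<subseteq> insert k (A - {i}) \<Longrightarrow> card B \<le> card A"
proof -
  assume a: "finite A" "i \<in> A" "B \<subseteq> insert k (A - {i})"
  have "card B \<le> card (insert k (A - {i}))" using a by (intro card_mono) auto
  also have "\<dots> \<le> card (A - {i}) + 1" by (simp add: card_insert_le_m1 card_insert_if)
  also have "\<dots> = card A"
  proof -
    have "card A > 0" using a card_gt_0_iff by blast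
    then show ?thesis using a by (simp add: card_Diff_singleton)
  qed
  finally show ?thesis .
qed

lemma exit_inv:
  assumes "cinv m s" shows "cinv m (exit_state s)"
proof -
  obtain x I y J N where s: "s = (x, I, y, J, N)" by (cases s) auto
  have finJ: "finite J" and IJ: "I \<subseteq> J" and JN: "J \<subseteq> {..N}"
    and c: "card {i \<in> I. x i \<noteq> y i} + card (J - I) \<le> m"
    using assms s by (auto simp: cinv_def)
  have finI: "finite I" using finJ IJ finite_subset by blast
  let ?D = "{i \<in> I. x i \<noteq> y i}"
  have finD: "finite ?D" using finI by simp
  show ?thesis
  proof (cases "I = {}")
    case True
    have "card (J - {top_label y J}) \<le> card J" using finJ by (intro card_mono) auto
    then show ?thesis using True s finJ JN c by (auto simp: cinv_def exit_state_def)
  next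
    case False
    define i where "i = top_label x I"
    define k where "k = top_label y J"
    have Jne: "J \<noteq> {}" using False IJ by auto
    have iI: "i \<in> I" and ix: "\<And>l. l \<in> I \<Longrightarrow> x l \<le> x i"
      using top_label_props[OF finI False] i_def by auto
    have kJ: "k \<in> J" and ky: "\<And>l. l \<in> J \<Longrightarrow> y l \<le> y k"
      using top_label_props[OF finJ Jne] k_def by auto
    have iJ: "i \<in> J" using iI IJ by auto
    show ?thesis
    proof (cases "k \<in> I \<and> i \<noteq> k")
      case kc: True
      show ?thesis
      proof (cases "x k \<le> y i")
        case True
        have e: "exit_state s = (x, I - {i}, y(k := y i), J - {i}, N)"
          using s False kc True by (simp add: exit_state_def Let_def i_def k_def)
        have sub: "{l \<in> I - {i}. x l \<noteq> (y(k := y i)) l} \<subseteq> ?D"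
        proof
          fix l assume l: "l \<in> {l \<in> I - {i}. x l \<noteq> (y(k := y i)) l}"
          show "l \<in> ?D"
          proof (cases "l = k")
            case True
            have "y i \<le> y k" using ky iJ by simp
            then show ?thesis using l True \<open>x k \<le> y i\<close> by auto
          qed (use l in auto)
        qed
        have "card {l \<in> I - {i}. x l \<noteq> (y(k := y i)) l} \<le> card ?D"
          using card_mono[OF finD sub] .
        moreover have "(J - {i}) - (I - {i}) = J - I" using iI by auto
        ultimately show ?thesis using e c finJ IJ JN by (auto simp: cinv_def)
      next
        case False2: False
        have e: "exit_state s = (x(i := x k), I - {k}, y, J - {k}, N)"
          using s False kc False2 by (simp add: exit_state_def Let_def i_def k_def)
        have sub: "{l \<in> I - {k}. (x(i := x k)) l \<noteq> y l} \<subseteq> ?D"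
        proof
          fix l assume l: "l \<in> {l \<in> I - {k}. (x(i := x k)) l \<noteq> y l}"
          show "l \<in> ?D"
          proof (cases "l = i")
            case True
            have "x k \<le> x i" using ix kc by simp
            then show ?thesis using l True False2 iI by auto
          qed (use l in auto)
        qed
        have "card {l \<in> I - {k}. (x(i := x k)) l \<noteq> y l} \<le> card ?D"
          using card_mono[OF finD sub] .
        moreover have "(J - {k}) - (I - {k}) = J - I" using kc by auto
        ultimately show ?thesis using e c finJ IJ JN by (auto simp: cinv_def)
      qed
    next
      case kc: False
      have e: "exit_state s = (x, I - {i}, y, J - {k}, N)"
        using s False kc by (simp add: exit_state_def Let_def i_def k_def)
      have d: "card {l \<in> I - {i}. x l \<noteq> y l} \<le> card ?D"
        using finD by (intro card_mono) auto
      have "card ((J - {k}) - (I - {i})) \<le> card (J - I)"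
      proof (cases "i = k")
        case True
        then have "(J - {k}) - (I - {i}) = J - I" using iI by auto
        then show ?thesis by simp
      next
        case ne: False
        then have "k \<notin> I" using kc by auto
        then show ?thesis using finJ kJ
          by (intro card_le_plus1[where i=k and k=i]) auto
      qed
      moreover have "I - {i} \<subseteq> J - {k}" using kc IJ by auto
      ultimately show ?thesis using e c d finJ JN by (auto simp: cinv_def)
    qed
  qed
qed

lemma step_inv: "cstep M s t \<Longrightarrow> cinv m s \<Longrightarrow> cinv m t"
proof (induction rule: cstep.induct)
  case (move_x i I x y d J N)
  have "finite I" using move_x.prems finite_subset by (auto simp: cinv_def)
  then have "card {l \<in> I. (x(i := x i + d)) l \<noteq> y l} \<le> card {l \<in> I. x l \<noteq> y l}"
    using move_x.hyps by (intro card_mono) auto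
  then show ?case using move_x.prems by (auto simp: cinv_def)
next
  case (move_y i J I x y d N)
  have "finite I" using move_y.prems finite_subset by (auto simp: cinv_def)
  then have "card {l \<in> I. x l \<noteq> (y(i := y i + d)) l} \<le> card {l \<in> I. x l \<noteq> y l}"
    using move_y.hyps by (intro card_mono) auto
  then show ?case using move_y.prems by (auto simp: cinv_def)
next
  case (move_both i I x y d J N)
  have "{l \<in> I. (x(i := x i + d)) l \<noteq> (y(i := x i + d)) l} = {l \<in> I. x l \<noteq> y l}"
    using move_both.hyps by auto
  then show ?case using move_both.prems by (auto simp: cinv_def)
next
  case (arrive x I y J N)
  have f: "finite J" "I \<subseteq> J" "J \<subseteq> {..N}" "card {l \<in> I. x l \<noteq> y l} + card (J - I) \<le> m"
    using arrive by (simp_all add: cinv_def)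
  have nJ: "Suc N \<notin> J" using f(3) by auto
  then have nI: "Suc N \<notin> I" using f(2) by auto
  have e1: "{l \<in> insert (Suc N) I. (x(Suc N := 0)) l \<noteq> (y(Suc N := 0)) l} = {l \<in> I. x l \<noteq> y l}"
    using nI by auto
  have e2: "insert (Suc N) J - insert (Suc N) I = J - I" using nJ by auto
  have "insert (Suc N) J \<subseteq> {..Suc N}" using f(3) by auto
  moreover have "I \<subseteq> insert (Suc N) J" using f by blast
  ultimately show ?case unfolding cinv_def prod.case e1 e2 using f by simp
next
  case (leave s)
  then show ?case using exit_inv by blast
qed

lemma card_sum_int: "finite A \<Longrightarrow> int (card {i \<in> A. P i}) = (\<Sum>i\<in>A. if P i then 1 else 0)"
  by (simp add: sum.If_cases Int_def conj_commute)

lemma bound: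
  assumes finJ: "finite J" and IJ: "I \<subseteq> J"
  shows "(\<Sum>p = 0..int M. \<bar>int (occ x I p) - int (occ y J p)\<bar>)
     \<le> 2 * int (card {i \<in> I. x i \<noteq> y i}) + int (card (J - I))"
proof -
  let ?P = "{0..int M}"
  have finI: "finite I" using finJ IJ finite_subset by blast
  define ind :: "int \<Rightarrow> int \<Rightarrow> int" where "ind a p = (if a = p then 1 else 0)" for a p
  have ox: "int (occ x I p) = (\<Sum>i\<in>I. ind (x i) p)" for p
    unfolding occ_def ind_def using card_sum_int[OF finI] by simp
  have oy: "int (occ y J p) = (\<Sum>i\<in>I. ind (y i) p) + (\<Sum>i\<in>J - I. ind (y i) p)" for p
  proof -
    have "int (occ y J p) = (\<Sum>i\<in>J. ind (y i) p)"
      unfolding occ_def ind_def using card_sum_int[OF finJ] by simp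
    also have "\<dots> = (\<Sum>i\<in>I. ind (y i) p) + (\<Sum>i\<in>J - I. ind (y i) p)"
      using sum.subset_diff[OF IJ finJ, of "\<lambda>i. ind (y i) p"] by linarith
    finally show ?thesis .
  qed
  have pt: "\<bar>int (occ x I p) - int (occ y J p)\<bar>
      \<le> (\<Sum>i\<in>I. \<bar>ind (x i) p - ind (y i) p\<bar>) + (\<Sum>i\<in>J - I. ind (y i) p)" for p
  proof -
    have nn: "0 \<le> (\<Sum>i\<in>J - I. ind (y i) p)" by (intro sum_nonneg) (simp add: ind_def)
    have "\<bar>int (occ x I p) - int (occ y J p)\<bar>
        = \<bar>(\<Sum>i\<in>I. ind (x i) p - ind (y i) p) - (\<Sum>i\<in>J - I. ind (y i) p)\<bar>"
      by (simp add: ox oy sum_subtractf)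
    also have "\<dots> \<le> \<bar>\<Sum>i\<in>I. ind (x i) p - ind (y i) p\<bar> + (\<Sum>i\<in>J - I. ind (y i) p)"
      using nn by linarith
    also have "\<dots> \<le> (\<Sum>i\<in>I. \<bar>ind (x i) p - ind (y i) p\<bar>) + (\<Sum>i\<in>J - I. ind (y i) p)"
      by (intro add_right_mono sum_abs)
    finally show ?thesis .
  qed
  have delta: "(\<Sum>p\<in>?P. ind a p) \<le> 1" for a
    by (simp add: ind_def sum.delta)
  have two: "(\<Sum>p\<in>?P. \<bar>ind a p - ind b p\<bar>) \<le> (if a \<noteq> b then 2 else 0)" for a b
  proof (cases "a = b")
    case False
    have "(\<Sum>p\<in>?P. \<bar>ind a p - ind b p\<bar>) \<le> (\<Sum>p\<in>?P. ind a p + ind b p)"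
      by (intro sum_mono) (simp add: ind_def)
    also have "\<dots> \<le> 2" using delta[of a] delta[of b] by (simp add: sum.distrib)
    finally show ?thesis using False by simp
  qed simp
  have "(\<Sum>p\<in>?P. \<bar>int (occ x I p) - int (occ y J p)\<bar>)
      \<le> (\<Sum>p\<in>?P. (\<Sum>i\<in>I. \<bar>ind (x i) p - ind (y i) p\<bar>) + (\<Sum>i\<in>J - I. ind (y i) p))"
    by (intro sum_mono pt)
  also have "\<dots> = (\<Sum>i\<in>I. \<Sum>p\<in>?P. \<bar>ind (x i) p - ind (y i) p\<bar>) + (\<Sum>i\<in>J - I. \<Sum>p\<in>?P. ind (y i) p)"
    unfolding sum.distrib by (simp only: sum.swap[of _ ?P I] sum.swap[of _ ?P "J - I"])
  also have "\<dots> \<le> (\<Sum>i\<in>I. (if x i \<noteq> y i then 2 else 0)) + (\<Sum>i\<in>J - I. 1)"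
    by (intro add_mono sum_mono two delta)
  also have "\<dots> = 2 * int (card {i \<in> I. x i \<noteq> y i}) + int (card (J - I))"
  proof -
    have "(\<Sum>i\<in>I. (if x i \<noteq> y i then 2 else 0)::int) = 2 * (\<Sum>i\<in>I. if x i \<noteq> y i then 1 else 0)"
      unfolding sum_distrib_left by (rule sum.cong) auto
    also have "\<dots> = 2 * int (card {i \<in> I. x i \<noteq> y i})" using card_sum_int[OF finI] by simp
    finally show ?thesis by simp
  qed
  finally show ?thesis .
qed

theorem lemma4p4:
  fixes eps j :: real and M n m :: nat
    and x0 y0 x y :: "nat \<Rightarrow> int" and I J :: "nat set" and N :: nat
  assumes "j > 0" and "eps > 0" and "1 / eps = real M"
    and "n > 0"
    and "\<forall>i \<in> {1..n}. 0 \<le> x0 i \<and> x0 i \<le> int M"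
    and "\<forall>i \<in> {1..n+m}. 0 \<le> y0 i \<and> y0 i \<le> int M"
    and "\<forall>i \<in> {1..n}. x0 i = y0 i"
    and "(cstep M)\<^sup>*\<^sup>* (x0, {1..n}, y0, {1..n+m}, n+m) (x, I, y, J, N)"
  shows "(\<Sum>p = 0..int M. \<bar>int (occ x I p) - int (occ y J p)\<bar>)
           \<le> int (card {i \<in> I. x i \<noteq> y i}) + int m"
proof -
  have "{i \<in> {1..n}. x0 i \<noteq> y0 i} = {}" using assms(7) by auto
  moreover have "card ({1..n+m} - {1..n}) = m"
    by (subst card_Diff_subset) auto
  ultimately have i0: "cinv m (x0, {1..n}, y0, {1..n+m}, n+m)"
    by (simp add: cinv_def)
  have "cinv m (x, I, y, J, N)"
    using assms(8) i0 by (induction rule: rtranclp_induct) (auto intro: step_inv)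
  then have inv: "finite J" "I \<subseteq> J" "card {i \<in> I. x i \<noteq> y i} + card (J - I) \<le> m"
    by (auto simp: cinv_def)
  show ?thesis using bound[OF inv(1,2), where M=M and x=x and y=y] inv(3) by linarith
qed

end
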